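(* Let $n\ge 4$ and let $k\ge l\ge 0$ be integers, $\lambda=(2k,k,\dots,k,0)$, $\mu=(2l,l,\dots,l,0)$ in $\Lambda_n$. The $\mathrm{SL}_n(\mathbb{C})$-module $V_n(\lambda)\otimes V_n(\mu)$ contains exactly $(l+1)^2$ distinct self-dual isotypic components; that is, the number of $\nu\in\Lambda_n$ with $c_{\lambda\mu}^\nu\neq 0$ and $\nu_i-\nu_{i+1}=\nu_{n-i}-\nu_{n-i+1}$ for all $1\le i\le n-1$ is $(l+1)^2$.
   Context: $\Lambda_n$ is the set of non-increasing sequences of $n$ nonnegative integers; $(2k,k,\dots,k,0)$ has $n-2$ parts equal to $k$. $V_n(\nu)$ is the irreducible $\mathrm{GL}_n(\mathbb{C})$-module of highest weight $\nu$; its restriction to $\mathrm{SL}_n(\mathbb{C})$ is self-dual exactly when $\nu_i-\nu_{i+1}=\nu_{n-i}-\nu_{n-i+1}$ for all $i$. $c_{\lambda\mu}^\nu$ is defined by $V_n(\lambda)\otimes V_n(\mu)=\bigoplus_\nu c_{\lambda\mu}^\nu V_n(\nu)$. *)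

theory Defs
  imports Main
begin

text \<open>Lambda_n: non-increasing sequences of n nonnegative integers, as lists of length n
  (0-indexed: entry i is the (i+1)-st part).\<close>
definition Lambda :: "nat \<Rightarrow> nat list set" where
  "Lambda n = {nu. length nu = n \<and> (\<forall>i. Suc i < n \<longrightarrow> nu ! Suc i \<le> nu ! i)}"

definition skew_cells :: "nat \<Rightarrow> nat list \<Rightarrow> nat list \<Rightarrow> (nat \<times> nat) set" where
  "skew_cells n lam nu = {(i, j). i < n \<and> lam ! i \<le> j \<and> j < nu ! i}"

text \<open>Reading order (rows top to bottom, each row right to left):
  c' is read no later than c.\<close>
definition read_le :: "nat \<times> nat \<Rightarrow> nat \<times> nat \<Rightarrow> bool" where
  "read_le c' c \<longleftrightarrow> fst c' < fst c \<or> (fst c' = fst c \<and> snd c \<le> snd c')"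

text \<open>Littlewood-Richardson tableaux of shape nu/lam and content mu (entries 0..n-1
  stand for the labels 1..n): semistandard fillings whose reverse reading word is a
  lattice word.\<close>
definition is_LR_tableau ::
  "nat \<Rightarrow> nat list \<Rightarrow> nat list \<Rightarrow> nat list \<Rightarrow> (nat \<times> nat \<Rightarrow> nat) \<Rightarrow> bool" where
  "is_LR_tableau n lam mu nu T \<longleftrightarrow>
     (\<forall>i<n. lam ! i \<le> nu ! i) \<and>
     (\<forall>c. c \<notin> skew_cells n lam nu \<longrightarrow> T c = 0) \<and>
     (\<forall>c\<in>skew_cells n lam nu. T c < n) \<and>
     (\<forall>i j. (i, j) \<in> skew_cells n lam nu \<and> (i, Suc j) \<in> skew_cells n lam nu
            \<longrightarrow> T (i, j) \<le> T (i, Suc j)) \<and>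
     (\<forall>i j. (i, j) \<in> skew_cells n lam nu \<and> (Suc i, j) \<in> skew_cells n lam nu
            \<longrightarrow> T (i, j) < T (Suc i, j)) \<and>
     (\<forall>r<n. card {c \<in> skew_cells n lam nu. T c = r} = mu ! r) \<and>
     (\<forall>c\<in>skew_cells n lam nu. \<forall>r. Suc r < n \<longrightarrow>
        card {c' \<in> skew_cells n lam nu. read_le c' c \<and> T c' = Suc r}
          \<le> card {c' \<in> skew_cells n lam nu. read_le c' c \<and> T c' = r})"

text \<open>Littlewood-Richardson coefficient c^nu_{lam mu} for GL_n (LR rule): the
  multiplicity of V_n(nu) in V_n(lam) \<otimes> V_n(mu).\<close>
definition lr_coeff :: "nat \<Rightarrow> nat list \<Rightarrow> nat list \<Rightarrow> nat list \<Rightarrow> nat" where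
  "lr_coeff n lam mu nu = card {T. is_LR_tableau n lam mu nu T}"

definition self_dual :: "nat \<Rightarrow> nat list \<Rightarrow> bool" where
  "self_dual n nu \<longleftrightarrow> (\<forall>i. 1 \<le> i \<and> i \<le> n - 1 \<longrightarrow>
      int (nu ! (i - 1)) - int (nu ! i) = int (nu ! (n - i - 1)) - int (nu ! (n - i)))"

definition special_wt :: "nat \<Rightarrow> nat \<Rightarrow> nat list" where
  "special_wt n k = (2 * k) # replicate (n - 2) k @ [0]"

end

theory Submission
  imports Defs
begin

lemma skew_finite: "finite (skew_cells n lam nu)"
proof -
  have "skew_cells n lam nu \<subseteq> Sigma {..<n} (\<lambda>i. {..<nu!i})"
    by (auto simp: skew_cells_def)
  then show ?thesis by (rule finite_subset) auto
qed

lemma skew_eq: "skew_cells n lam nu = Sigma {..<n} (\<lambda>i. {lam!i..<nu!i})"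
  by (auto simp: skew_cells_def)

lemma card_skew: "card (skew_cells n lam nu) = (\<Sum>i<n. nu!i - lam!i)"
  by (simp add: skew_eq card_SigmaI)

lemma card_row: "i < n \<Longrightarrow> card {c \<in> skew_cells n lam nu. fst c = i} = nu!i - lam!i"
proof -
  assume "i < n"
  then have "{c \<in> skew_cells n lam nu. fst c = i} = {i} \<times> {lam!i..<nu!i}"
    by (auto simp: skew_cells_def)
  then show ?thesis by simp
qed

lemma LR_row_mono:
  assumes "is_LR_tableau n lam mu nu T" "(i,j) \<in> skew_cells n lam nu" "(i,j+d) \<in> skew_cells n lam nu"
  shows "T (i,j) \<le> T (i,j+d)"
  using assms(3)
proof (induction d)
  case 0 then show ?case by simp
next
  case (Suc d)
  have "(i, j+d) \<in> skew_cells n lam nu" using Suc.prems assms(2) by (auto simp: skew_cells_def)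
  moreover have "T (i, j+d) \<le> T (i, Suc (j+d))"
    using assms(1) Suc.prems \<open>(i, j+d) \<in> skew_cells n lam nu\<close> unfolding is_LR_tableau_def by auto
  ultimately show ?case using Suc.IH by simp
qed

lemma LR_row_mono':
  assumes "is_LR_tableau n lam mu nu T" "(i,j) \<in> skew_cells n lam nu" "(i,j') \<in> skew_cells n lam nu" "j \<le> j'"
  shows "T (i,j) \<le> T (i,j')"
  using LR_row_mono[OF assms(1,2), of "j' - j"] assms(3,4) by simp

lemma LR_lattice_step:
  assumes LR: "is_LR_tableau n lam mu nu T" and r: "Suc r < n"
    and ex: "\<exists>j. (i,j) \<in> skew_cells n lam nu \<and> T (i,j) = Suc r"
  shows "card {c \<in> skew_cells n lam nu. fst c \<le> i \<and> T c = Suc r}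
       \<le> card {c \<in> skew_cells n lam nu. fst c < i \<and> T c = r}"
proof -
  let ?S = "skew_cells n lam nu"
  define j0 where "j0 = (LEAST j. (i,j) \<in> ?S \<and> T (i,j) = Suc r)"
  have j0: "(i,j0) \<in> ?S \<and> T (i,j0) = Suc r" unfolding j0_def using ex by (rule LeastI_ex)
  have j0min: "\<And>j. (i,j) \<in> ?S \<Longrightarrow> T (i,j) = Suc r \<Longrightarrow> j0 \<le> j"
    unfolding j0_def by (rule Least_le) simp
  have lat: "card {c' \<in> ?S. read_le c' (i,j0) \<and> T c' = Suc r} \<le> card {c' \<in> ?S. read_le c' (i,j0) \<and> T c' = r}"
    using LR j0 r unfolding is_LR_tableau_def by blast
  have s1: "{c \<in> ?S. fst c \<le> i \<and> T c = Suc r} \<subseteq> {c' \<in> ?S. read_le c' (i,j0) \<and> T c' = Suc r}"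
  proof
    fix c assume c: "c \<in> {c \<in> ?S. fst c \<le> i \<and> T c = Suc r}"
    obtain a b where ab: "c = (a,b)" by force
    show "c \<in> {c' \<in> ?S. read_le c' (i,j0) \<and> T c' = Suc r}"
    proof (cases "a = i")
      case True then show ?thesis using c ab j0min[of b] by (auto simp: read_le_def)
    next
      case False then show ?thesis using c ab by (auto simp: read_le_def)
    qed
  qed
  have s2: "{c' \<in> ?S. read_le c' (i,j0) \<and> T c' = r} \<subseteq> {c \<in> ?S. fst c < i \<and> T c = r}"
  proof
    fix c assume c: "c \<in> {c' \<in> ?S. read_le c' (i,j0) \<and> T c' = r}"
    obtain a b where ab: "c = (a,b)" by force
    show "c \<in> {c \<in> ?S. fst c < i \<and> T c = r}"
    proof (cases "a = i")
      case True
      then have "j0 \<le> b" "(i,b) \<in> ?S" using c ab by (auto simp: read_le_def)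
      then have "T (i,j0) \<le> T (i,b)" using LR_row_mono'[OF LR] j0 by blast
      then show ?thesis using j0 c ab True by auto
    next
      case False then show ?thesis using c ab by (auto simp: read_le_def)
    qed
  qed
  have f: "finite ?S" by (rule skew_finite)
  have "card {c \<in> ?S. fst c \<le> i \<and> T c = Suc r} \<le> card {c' \<in> ?S. read_le c' (i,j0) \<and> T c' = Suc r}"
    by (rule card_mono[OF _ s1]) (use f in auto)
  also note lat
  also have "card {c' \<in> ?S. read_le c' (i,j0) \<and> T c' = r} \<le> card {c \<in> ?S. fst c < i \<and> T c = r}"
    by (rule card_mono[OF _ s2]) (use f in auto)
  finally show ?thesis .
qed

lemma LR_lattice:
  assumes LR: "is_LR_tableau n lam mu nu T" and r: "Suc r < n"
  shows "card {c \<in> skew_cells n lam nu. fst c \<le> i \<and> T c = Suc r}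
       \<le> card {c \<in> skew_cells n lam nu. fst c < i \<and> T c = r}"
proof (induction i)
  case 0
  show ?case
  proof (cases "\<exists>j. (0,j) \<in> skew_cells n lam nu \<and> T (0,j) = Suc r")
    case True then show ?thesis using LR_lattice_step[OF LR r] by blast
  next
    case False
    have "{c \<in> skew_cells n lam nu. fst c \<le> 0 \<and> T c = Suc r} = {}"
    proof (rule ccontr)
      assume "{c \<in> skew_cells n lam nu. fst c \<le> 0 \<and> T c = Suc r} \<noteq> {}"
      then obtain a b where "(a,b) \<in> skew_cells n lam nu" "a \<le> 0" "T (a,b) = Suc r" by auto
      then show False using False by auto
    qed
    then show ?thesis by (metis card.empty zero_le)
  qed
next
  case (Suc i)
  show ?case
  proof (cases "\<exists>j. (Suc i,j) \<in> skew_cells n lam nu \<and> T (Suc i,j) = Suc r")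
    case True then show ?thesis using LR_lattice_step[OF LR r] by blast
  next
    case False
    then have e: "{c \<in> skew_cells n lam nu. fst c \<le> Suc i \<and> T c = Suc r}
       = {c \<in> skew_cells n lam nu. fst c \<le> i \<and> T c = Suc r}" by (auto simp: le_Suc_eq)
    have "card {c \<in> skew_cells n lam nu. fst c < i \<and> T c = r} \<le> card {c \<in> skew_cells n lam nu. fst c < Suc i \<and> T c = r}"
      by (rule card_mono) (use skew_finite in auto)
    then show ?thesis using e Suc.IH by simp
  qed
qed

lemma LR_content:
  assumes LR: "is_LR_tableau n lam mu nu T"
  shows "card (skew_cells n lam nu) = (\<Sum>r<n. mu!r)"
proof -
  let ?S = "skew_cells n lam nu"
  have e: "?S = (\<Union>r\<in>{..<n}. {c \<in> ?S. T c = r})" using LR unfolding is_LR_tableau_def by auto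
  have "card ?S = (\<Sum>r<n. card {c \<in> ?S. T c = r})"
    by (subst e, rule card_UN_disjoint) (use skew_finite in auto)
  also have "\<dots> = (\<Sum>r<n. mu!r)" using LR unfolding is_LR_tableau_def by auto
  finally show ?thesis .
qed

lemma LR_finite: "finite {T. is_LR_tableau n lam mu nu T}"
proof -
  have "{T. is_LR_tableau n lam mu nu T} \<subseteq>
     {f. \<forall>x. (x \<in> skew_cells n lam nu \<longrightarrow> f x \<in> {..<n}) \<and> (x \<notin> skew_cells n lam nu \<longrightarrow> f x = 0)}"
    unfolding is_LR_tableau_def by auto
  then show ?thesis by (rule finite_subset) (intro finite_set_of_finite_funs skew_finite finite_lessThan)
qed

definition nuf :: "nat \<Rightarrow> nat \<Rightarrow> nat \<Rightarrow> nat \<Rightarrow> nat \<Rightarrow> nat" where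
  "nuf n c p q i = (if i = 0 then c+p else if i = 1 then c+q else if i = n-2 then c-q
     else if i = n-1 then c-p else c)"

definition mk :: "nat \<Rightarrow> nat \<Rightarrow> nat \<Rightarrow> nat \<Rightarrow> nat list" where
  "mk n c p q = map (nuf n c p q) [0..<n]"

lemma sw_len: "2 \<le> n \<Longrightarrow> length (special_wt n k) = n"
  by (simp add: special_wt_def)

lemma sw_nth: "2 \<le> n \<Longrightarrow> i < n \<Longrightarrow>
   special_wt n k ! i = (if i = 0 then 2*k else if i = n-1 then 0 else k)"
  by (auto simp: special_wt_def nth_Cons nth_append split: nat.split)

lemma sw_sum: "2 \<le> n \<Longrightarrow> (\<Sum>i<n. special_wt n k ! i) = n * k"
proof -
  assume n: "2 \<le> n"
  have "(\<Sum>i<n. special_wt n k ! i) = sum_list (special_wt n k)"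
    by (simp add: sum_list_sum_nth sw_len[OF n] atLeast0LessThan)
  also have "\<dots> = 2*k + (n-2)*k" by (simp add: special_wt_def sum_list_replicate)
  also have "\<dots> = n*k" using n by (simp add: algebra_simps flip: add_mult_distrib)
  finally show ?thesis .
qed

lemma Lambda_mono: "nu \<in> Lambda n \<Longrightarrow> i \<le> j \<Longrightarrow> j < n \<Longrightarrow> nu!j \<le> nu!i"
proof (induction j)
  case 0 then show ?case by simp
next
  case (Suc j)
  show ?case
  proof (cases "i = Suc j")
    case True then show ?thesis by simp
  next
    case False
    then have "nu!j \<le> nu!i" using Suc by simp
    moreover have "nu ! Suc j \<le> nu ! j" using Suc.prems unfolding Lambda_def by auto
    ultimately show ?thesis by simp
  qed
qed

lemma sd_pairs:
  assumes sd: "self_dual n nu"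
  shows "i < n \<Longrightarrow> int (nu!i) + int (nu!(n - Suc i)) = int (nu!0) + int (nu!(n-1))"
proof (induction i)
  case 0 then show ?case by simp
next
  case (Suc i)
  have h: "1 \<le> Suc i \<and> Suc i \<le> n - 1" using Suc.prems by simp
  have A: "\<forall>i. 1 \<le> i \<and> i \<le> n - 1 \<longrightarrow>
      int (nu ! (i - 1)) - int (nu ! i) = int (nu ! (n - i - 1)) - int (nu ! (n - i))"
    using sd unfolding self_dual_def by assumption
  have "int (nu ! (Suc i - 1)) - int (nu ! Suc i) = int (nu ! (n - Suc i - 1)) - int (nu ! (n - Suc i))"
    using mp[OF spec[OF A, of "Suc i"] h] .
  moreover have "Suc i - 1 = i" "n - Suc i - 1 = n - Suc (Suc i)" by simp_all
  ultimately have "int (nu ! i) - int (nu ! Suc i) = int (nu ! (n - Suc (Suc i))) - int (nu ! (n - Suc i))"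
    by simp
  moreover have "int (nu!i) + int (nu!(n - Suc i)) = int (nu!0) + int (nu!(n-1))"
    using Suc by simp
  ultimately show ?case by linarith
qed

lemma necessity:
  fixes n k l :: nat and nu :: "nat list" and T
  assumes n4: "4 \<le> n" and lk: "l \<le> k" and nuL: "nu \<in> Lambda n"
    and LR: "is_LR_tableau n (special_wt n k) (special_wt n l) nu T" and sd: "self_dual n nu"
  shows "k + l \<le> nu!1 \<and> nu!1 \<le> nu!0 \<and> k + (nu!1 - (k+l)) \<le> (nu!0 - (k+l)) + l
     \<and> (nu!0 - (k+l)) + (nu!1 - (k+l)) \<le> k + l \<and> nu = mk n (k+l) (nu!0 - (k+l)) (nu!1 - (k+l))"
proof -
  define lam where "lam = special_wt n k"
  define mu where "mu = special_wt n l"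
  define S where "S = skew_cells n lam nu"
  define c where "c = k + l"
  have LR': "is_LR_tableau n lam mu nu T" using LR by (simp add: lam_def mu_def)
  have n2: "2 \<le> n" using n4 by simp
  have lam: "\<And>i. i < n \<Longrightarrow> lam!i = (if i = 0 then 2*k else if i = n-1 then 0 else k)"
    unfolding lam_def using sw_nth[OF n2] by blast
  have mu: "\<And>i. i < n \<Longrightarrow> mu!i = (if i = 0 then 2*l else if i = n-1 then 0 else l)"
    unfolding mu_def using sw_nth[OF n2] by blast
  have len: "length nu = n" using nuL by (simp add: Lambda_def)
  have mono: "\<And>i j. i \<le> j \<Longrightarrow> j < n \<Longrightarrow> nu!j \<le> nu!i" using Lambda_mono[OF nuL] by blast
  have lamle: "\<And>i. i < n \<Longrightarrow> lam!i \<le> nu!i" using LR' unfolding is_LR_tableau_def by blast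
  have Tlt: "\<And>c. c \<in> S \<Longrightarrow> T c < n" using LR' unfolding is_LR_tableau_def S_def by blast
  have cont: "\<And>r. r < n \<Longrightarrow> card {c \<in> S. T c = r} = mu!r"
    using LR' unfolding is_LR_tableau_def S_def by blast
  have colstr: "\<And>i j. (i, j) \<in> S \<Longrightarrow> (Suc i, j) \<in> S \<Longrightarrow> T (i, j) < T (Suc i, j)"
    using LR' unfolding is_LR_tableau_def S_def by blast
  have lat: "\<And>i r. Suc r < n \<Longrightarrow> card {c \<in> S. fst c \<le> i \<and> T c = Suc r} \<le> card {c \<in> S. fst c < i \<and> T c = r}"
    unfolding S_def by (rule LR_lattice[OF LR'])
  have fS: "finite S" unfolding S_def by (rule skew_finite)
  have fin: "\<And>P. finite {c \<in> S. P c}" using fS by simp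
  have Sfst: "\<And>c. c \<in> S \<Longrightarrow> fst c < n" unfolding S_def skew_cells_def by auto

  have sumnu: "(\<Sum>i<n. nu!i) = n * c"
  proof -
    have "(\<Sum>i<n. nu!i - lam!i) = (\<Sum>r<n. mu!r)"
      using card_skew[of n lam nu] LR_content[OF LR'] by simp
    moreover have "(\<Sum>i<n. nu!i - lam!i) = (\<Sum>i<n. nu!i) - (\<Sum>i<n. lam!i)"
      by (rule sum_subtractf_nat) (use lamle in auto)
    moreover have "(\<Sum>i<n. lam!i) = n*k" unfolding lam_def by (rule sw_sum[OF n2])
    moreover have "(\<Sum>r<n. mu!r) = n*l" unfolding mu_def by (rule sw_sum[OF n2])
    moreover have "(\<Sum>i<n. lam!i) \<le> (\<Sum>i<n. nu!i)" by (rule sum_mono) (use lamle in auto)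
    ultimately show ?thesis unfolding c_def by (simp add: algebra_simps)
  qed
  have pairs0: "\<And>i. i < n \<Longrightarrow> nu!i + nu!(n - Suc i) = nu!0 + nu!(n-1)"
    using sd_pairs[OF sd] by (metis of_nat_add of_nat_eq_iff)
  have pairs: "\<And>i. i < n \<Longrightarrow> nu!i + nu!(n - Suc i) = 2*c"
  proof -
    have "(\<Sum>i<n. nu!i + nu!(n - Suc i)) = (\<Sum>i<n. nu!i) + (\<Sum>i<n. nu!(n - Suc i))"
      by (rule sum.distrib)
    also have "(\<Sum>i<n. nu!(n - Suc i)) = (\<Sum>i<n. nu!i)" by (rule sum.nat_diff_reindex)
    finally have "(\<Sum>i<n. nu!i + nu!(n - Suc i)) = 2 * (n * c)" using sumnu by simp
    moreover have "(\<Sum>i<n. nu!i + nu!(n - Suc i)) = (\<Sum>i<n. nu!0 + nu!(n-1))"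
      by (intro sum.cong refl pairs0) simp
    moreover have "(\<Sum>i<n. nu!0 + nu!(n-1)) = n * (nu!0 + nu!(n-1))" by simp
    ultimately have "n * (nu!0 + nu!(n-1)) = 2 * (n * c)" by linarith
    then have "n * (nu!0 + nu!(n-1)) = n * (2*c)" by (simp only: mult.left_commute)
    moreover have "n \<noteq> 0" using n4 by simp
    ultimately have e: "nu!0 + nu!(n-1) = 2*c" using mult_left_cancel by blast
    show "\<And>i. i < n \<Longrightarrow> nu!i + nu!(n - Suc i) = 2*c"
    proof -
      fix i assume "i < n"
      from pairs0[OF this] e show "nu!i + nu!(n - Suc i) = 2*c" by (rule trans)
    qed
  qed

  have pos: "\<And>P x. x \<in> S \<Longrightarrow> P x \<Longrightarrow> 0 < card {c \<in> S. P c}"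
    using fin card_gt_0_iff by blast
  have row0: "\<And>c. c \<in> S \<Longrightarrow> fst c = 0 \<Longrightarrow> T c = 0"
  proof (rule ccontr)
    fix c assume c: "c \<in> S" "fst c = 0" "T c \<noteq> 0"
    then obtain r where r: "T c = Suc r" by (cases "T c") auto
    have rn: "Suc r < n" using Tlt[OF c(1)] r by simp
    have "0 < card {c \<in> S. fst c \<le> 0 \<and> T c = Suc r}" using pos[of c] c r by simp
    moreover have "{c \<in> S. fst c < (0::nat) \<and> T c = r} = {}" by simp
    ultimately show False using lat[OF rn, of 0] by simp
  qed
  have row1: "\<And>c. c \<in> S \<Longrightarrow> fst c = 1 \<Longrightarrow> T c \<le> 1"
  proof (rule ccontr)
    fix c assume c: "c \<in> S" "fst c = 1" "\<not> T c \<le> 1"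
    then obtain r where r: "T c = Suc (Suc r)" by (cases "T c"; cases "T c - 1") auto
    have rn: "Suc (Suc r) < n" using Tlt[OF c(1)] r by simp
    have "0 < card {c \<in> S. fst c \<le> 1 \<and> T c = Suc (Suc r)}" using pos[of c] c r by simp
    moreover have "{c \<in> S. fst c < 1 \<and> T c = Suc r} = {}" using row0 by fastforce
    then have "card {c \<in> S. fst c < 1 \<and> T c = Suc r} = 0" by (simp only: card.empty)
    ultimately show False using lat[OF rn, of 1] by linarith
  qed
  have lam1: "lam!1 = k" "lam!2 = k" "lam!0 = 2*k" "lam!(n-1) = 0" using lam n4 by auto
  have mu1: "mu!0 = 2*l" "mu!1 = l" "mu!(n-2) = l" "mu!(n-1) = 0" using mu n4 by auto
  have row2: "\<And>c. c \<in> S \<Longrightarrow> fst c = 2 \<Longrightarrow> T c = 1 \<or> T c = 2"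
  proof (rule ccontr)
    fix c assume c: "c \<in> S" "fst c = 2" "\<not> (T c = 1 \<or> T c = 2)"
    obtain j where cj: "c = (2,j)" using c(2) by (cases c) auto
    show False
    proof (cases "T c = 0")
      case True
      have "(2,j) \<in> S" using c cj by simp
      then have j: "k \<le> j" "j < nu!2" using lam1 unfolding S_def skew_cells_def by auto
      have "nu!2 \<le> nu!1" using mono[of 1 2] n4 by simp
      then have "(1,j) \<in> S" using j lam1 n4 unfolding S_def skew_cells_def by auto
      moreover have "(Suc 1, j) \<in> S" using \<open>(2,j) \<in> S\<close> by (simp add: numeral_2_eq_2)
      ultimately have "T (1,j) < T (Suc 1, j)" by (rule colstr)
      moreover have "T (Suc 1, j) = 0" using True cj by (simp add: numeral_2_eq_2)
      ultimately show False by simp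
    next
      case False
      then obtain r where r: "T c = Suc (Suc (Suc r))" using c(3)
        by (cases "T c"; cases "T c - 1"; cases "T c - 2") auto
      have rn: "Suc (Suc (Suc r)) < n" using Tlt[OF c(1)] r by simp
      have "0 < card {c \<in> S. fst c \<le> 2 \<and> T c = Suc (Suc (Suc r))}" using pos[of c] c r by simp
      moreover have "{c \<in> S. fst c < 2 \<and> T c = Suc (Suc r)} = {}"
      proof (rule ccontr)
        assume "{c \<in> S. fst c < 2 \<and> T c = Suc (Suc r)} \<noteq> {}"
        then obtain d where d: "d \<in> S" "fst d < 2" "T d = Suc (Suc r)" by auto
        show False
        proof (cases "fst d = 0")
          case True then show False using row0[OF d(1)] d by simp
        next
          case False then have "fst d = 1" using d by simp
          then show False using row1[OF d(1)] d by simp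
        qed
      qed
      then have "card {c \<in> S. fst c < 2 \<and> T c = Suc (Suc r)} = 0" by (simp only: card.empty)
      ultimately show False using lat[OF rn, of 2] by linarith
    qed
  qed
  have rowL: "\<And>c. c \<in> S \<Longrightarrow> fst c = n-1 \<Longrightarrow> T c = 0 \<or> T c = n-2"
  proof (rule ccontr)
    fix c assume c: "c \<in> S" "fst c = n-1" "\<not> (T c = 0 \<or> T c = n-2)"
    define r where "r = T c"
    have rn: "r < n" using Tlt[OF c(1)] r_def by simp
    show False
    proof (cases "r = n-1")
      case True
      have "0 < card {c \<in> S. T c = n-1}" using pos[of c] c True r_def by simp
      then show False using cont[of "n-1"] mu1 n4 by simp
    next
      case False
      then have r1: "1 \<le> r" "Suc r < n" "Suc r \<noteq> n-1" "r \<noteq> n-1" using c(3) rn r_def by auto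
      have e1: "{c \<in> S. fst c \<le> n-1 \<and> T c = Suc r} = {c \<in> S. T c = Suc r}" using Sfst by fastforce
      have "card {c \<in> S. T c = Suc r} = l" using cont[of "Suc r"] mu r1 by simp
      moreover have "card {c \<in> S. fst c < n-1 \<and> T c = r} < card {c \<in> S. T c = r}"
      proof (rule psubset_card_mono)
        show "finite {c \<in> S. T c = r}" by (rule fin)
        have "c \<in> {c \<in> S. T c = r}" "c \<notin> {c \<in> S. fst c < n-1 \<and> T c = r}" using c r_def by auto
        then show "{c \<in> S. fst c < n-1 \<and> T c = r} \<subset> {c \<in> S. T c = r}" by blast
      qed
      moreover have "card {c \<in> S. T c = r} = l" using cont[of r] mu r1 rn by simp
      ultimately show False using lat[OF r1(2), of "n-1"] e1 by simp
    qed
  qed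
  define Q where "Q = (\<lambda>i r. {c \<in> S. fst c = i \<and> T c = r})"
  define R where "R = (\<lambda>i. {c \<in> S. fst c = i})"
  have cR: "\<And>i. i < n \<Longrightarrow> card (R i) = nu!i - lam!i" unfolding R_def S_def by (rule card_row)
  have finQ: "\<And>i r. finite (Q i r)" unfolding Q_def using fin by simp
  have R0: "R 0 = Q 0 0" unfolding R_def Q_def using row0 by auto
  have R1: "R 1 = Q 1 0 \<union> Q 1 1" unfolding R_def Q_def using row1 by fastforce
  have R2: "R 2 = Q 2 1 \<union> Q 2 2" unfolding R_def Q_def using row2 by fastforce
  have RL: "R (n-1) = Q (n-1) 0 \<union> Q (n-1) (n-2)" unfolding R_def Q_def using rowL by fastforce
  have cR1: "card (R 1) = card (Q 1 0) + card (Q 1 1)" unfolding R1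
    by (rule card_Un_disjoint) (use finQ in \<open>auto simp: Q_def\<close>)
  have cR2: "card (R 2) = card (Q 2 1) + card (Q 2 2)" unfolding R2
    by (rule card_Un_disjoint) (use finQ in \<open>auto simp: Q_def\<close>)
  have cRL: "card (R (n-1)) = card (Q (n-1) 0) + card (Q (n-1) (n-2))" unfolding RL
    by (rule card_Un_disjoint) (use finQ n4 in \<open>auto simp: Q_def\<close>)
  have I1: "card (Q 0 0) + card (Q 1 0) + card (Q (n-1) 0) \<le> 2*l"
  proof -
    have "card (Q 0 0 \<union> Q 1 0) = card (Q 0 0) + card (Q 1 0)"
      by (rule card_Un_disjoint) (use finQ in \<open>auto simp: Q_def\<close>)
    moreover have "card ((Q 0 0 \<union> Q 1 0) \<union> Q (n-1) 0) = card (Q 0 0 \<union> Q 1 0) + card (Q (n-1) 0)"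
      by (rule card_Un_disjoint) (use finQ n4 in \<open>auto simp: Q_def\<close>)
    moreover have "card ((Q 0 0 \<union> Q 1 0) \<union> Q (n-1) 0) \<le> card {c \<in> S. T c = 0}"
      by (rule card_mono) (use fin in \<open>auto simp: Q_def\<close>)
    moreover have "card {c \<in> S. T c = 0} = 2*l" using cont[of 0] mu1 n4 by simp
    ultimately show ?thesis by linarith
  qed
  have I2: "card (Q 1 1) + card (Q 2 1) \<le> l"
  proof -
    have "card (Q 1 1 \<union> Q 2 1) = card (Q 1 1) + card (Q 2 1)"
      by (rule card_Un_disjoint) (use finQ in \<open>auto simp: Q_def\<close>)
    moreover have "card (Q 1 1 \<union> Q 2 1) \<le> card {c \<in> S. T c = 1}"
      by (rule card_mono) (use fin in \<open>auto simp: Q_def\<close>)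
    moreover have "card {c \<in> S. T c = 1} = l" using cont[of 1] mu1 n4 by simp
    ultimately show ?thesis by linarith
  qed
  have I3: "card (Q (n-1) (n-2)) \<le> l"
  proof -
    have "card (Q (n-1) (n-2)) \<le> card {c \<in> S. T c = n-2}"
      by (rule card_mono) (use fin in \<open>auto simp: Q_def\<close>)
    moreover have "card {c \<in> S. T c = n-2} = l" using cont[of "n-2"] mu1 n4 by simp
    ultimately show ?thesis by linarith
  qed
  have I4: "card (Q 1 1) \<le> card (Q 0 0)"
  proof -
    have "card (Q 1 1) \<le> card {c \<in> S. fst c \<le> 1 \<and> T c = Suc 0}"
      by (rule card_mono) (use fin in \<open>auto simp: Q_def\<close>)
    moreover have "card {c \<in> S. fst c < 1 \<and> T c = 0} \<le> card (Q 0 0)"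
      by (rule card_mono) (use finQ in \<open>auto simp: Q_def\<close>)
    moreover have "Suc 0 < n" using n4 by simp
    ultimately show ?thesis using lat[of 0 1] by linarith
  qed
  have I5: "card (Q 2 2) \<le> card (Q 1 1)"
  proof -
    have "card (Q 2 2) \<le> card {c \<in> S. fst c \<le> 2 \<and> T c = Suc 1}"
      by (rule card_mono) (use fin in \<open>auto simp: Q_def\<close>)
    moreover have "card {c \<in> S. fst c < 2 \<and> T c = 1} \<le> card (Q 1 1)"
    proof (rule card_mono)
      show "finite (Q 1 1)" by (rule finQ)
      show "{c \<in> S. fst c < 2 \<and> T c = 1} \<subseteq> Q 1 1"
      proof
        fix d assume d: "d \<in> {c \<in> S. fst c < 2 \<and> T c = 1}"
        then have "fst d \<noteq> 0" using row0 by fastforce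
        then show "d \<in> Q 1 1" using d by (auto simp: Q_def)
      qed
    qed
    moreover have "Suc 1 < n" using n4 by simp
    ultimately show ?thesis using lat[of 1 2] by linarith
  qed
  have n0: "n - Suc 0 = n - 1" by simp
  have P0: "nu!0 + nu!(n-1) = 2*c" using pairs[of 0] n4 by simp
  have P1: "nu!1 + nu!(n-2) = 2*c" using pairs[of 1] n4 by (simp add: numeral_2_eq_2)
  have M1: "nu!(n-2) \<le> nu!2" using mono[of 2 "n-2"] n4 by simp
  have M2: "nu!1 \<le> nu!0" using mono[of 0 1] n4 by simp
  have L0: "card (R 0) = nu!0 - 2*k" using cR[of 0] lam1 n4 by simp
  have L1: "card (R 1) = nu!1 - k" using cR[of 1] lam1 n4 by simp
  have L2: "card (R 2) = nu!2 - k" using cR[of 2] lam1 n4 by simp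
  have LL: "card (R (n-1)) = nu!(n-1)" using cR[of "n-1"] lam1 n4 by simp
  have ge: "2*k \<le> nu!0" "k \<le> nu!1" "k \<le> nu!2" using lamle[of 0] lamle[of 1] lamle[of 2] lam1 n4 by auto
  have d2: "nu!2 \<le> c" using L2 cR2 I2 I5 ge unfolding c_def by linarith
  have A1: "k + l \<le> nu!1"
  proof -
    have H: "\<And>b e d c::nat. b + e = 2*c \<Longrightarrow> e \<le> d \<Longrightarrow> d \<le> c \<Longrightarrow> c \<le> b" by linarith
    show ?thesis using H[OF P1 M1 d2] unfolding c_def .
  qed
  have cR0: "card (R 0) = card (Q 0 0)" using R0 by simp
  have L0': "card (R 0) + 2*k = nu!0" using L0 ge by simp
  have L1': "card (R 1) + k = nu!1" using L1 ge by simp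
  have A3: "nu!1 + k \<le> nu!0 + l"
  proof -
    have H: "\<And>r0 a r1 b rl f q00 q10 q11 ql0 qle::nat. r0 + 2*k = a \<Longrightarrow> r1 + k = b \<Longrightarrow> rl = f \<Longrightarrow>
      r0 = q00 \<Longrightarrow> r1 = q10 + q11 \<Longrightarrow> rl = ql0 + qle \<Longrightarrow> q00 + q10 + ql0 \<le> 2*l \<Longrightarrow> qle \<le> l \<Longrightarrow>
      q11 \<le> q00 \<Longrightarrow> a + f = 2*(k+l) \<Longrightarrow> b + k \<le> a + l" by simp
    show ?thesis by (rule H[OF L0' L1' LL cR0 cR1 cRL I1 I3 I4 P0[unfolded c_def]])
  qed
  have A4: "nu!0 + nu!1 \<le> 3*c" using L0' L1' cR0 cR1 I1 I2 unfolding c_def distrib_left by linarith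
  have mid: "\<And>i. i < n \<Longrightarrow> 2 \<le> i \<Longrightarrow> i \<le> n-3 \<Longrightarrow> nu!i = c"
  proof -
    fix i assume i: "i < n" "2 \<le> i" "i \<le> n-3"
    have "nu!i \<le> nu!2" using mono[of 2 i] i by simp
    moreover have "nu!(n - Suc i) \<le> nu!2" using mono[of 2 "n - Suc i"] i by simp
    moreover have "nu!i + nu!(n - Suc i) = 2*c" using pairs i by simp
    ultimately show "nu!i = c" using d2 by linarith
  qed
  have H: "\<And>b e c::nat. b + e = 2*c \<Longrightarrow> c \<le> b \<Longrightarrow> e = c - (b - c)" by arith
  have eq: "nu = mk n (k+l) (nu!0 - (k+l)) (nu!1 - (k+l))"
  proof (rule nth_equalityI)
    show "length nu = length (mk n (k+l) (nu!0 - (k+l)) (nu!1 - (k+l)))" using len by (simp add: mk_def)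
    fix i assume i: "i < length nu"
    then have i': "i < n" using len by simp
    have "mk n (k+l) (nu!0 - (k+l)) (nu!1 - (k+l)) ! i = nuf n (k+l) (nu!0 - (k+l)) (nu!1 - (k+l)) i"
      using i' by (simp add: mk_def)
    moreover have "nu!i = nuf n (k+l) (nu!0 - (k+l)) (nu!1 - (k+l)) i"
    proof -
      consider "i = 0" | "i = 1" | "i = n-2" | "i = n-1" | "2 \<le> i \<and> i \<le> n-3 \<and> i \<noteq> 0 \<and> i \<noteq> 1 \<and> i \<noteq> n-2 \<and> i \<noteq> n-1"
        using i' by linarith
      then show ?thesis
      proof cases
        case 1 then show ?thesis using A1 M2 by (simp add: nuf_def)
      next
        case 2 then show ?thesis using A1 M2 by (simp add: nuf_def)
      next
        case 3
        have v: "nuf n (k+l) (nu!0 - (k+l)) (nu!1 - (k+l)) i = (k+l) - (nu!1 - (k+l))"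
          using 3 n4 by (simp add: nuf_def)
        have "nu!i = (k+l) - (nu!1 - (k+l))" unfolding 3 by (rule H[OF P1[unfolded c_def] A1])
        then show ?thesis using v by simp
      next
        case 4
        have v: "nuf n (k+l) (nu!0 - (k+l)) (nu!1 - (k+l)) i = (k+l) - (nu!0 - (k+l))"
          using 4 n4 by (simp add: nuf_def)
        have "k + l \<le> nu!0" using A1 M2 by simp
        then have "nu!i = (k+l) - (nu!0 - (k+l))" unfolding 4 by (rule H[OF P0[unfolded c_def]])
        then show ?thesis using v by simp
      next
        case 5 then show ?thesis using mid[OF i'] unfolding c_def by (simp add: nuf_def)
      qed
    qed
    ultimately show "nu!i = mk n (k+l) (nu!0 - (k+l)) (nu!1 - (k+l)) ! i" by simp
  qed
  show ?thesis using A1 M2 A3 A4 eq unfolding c_def by auto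
qed

lemma ivl_card:
  assumes "lo \<le> (hi::nat)"
  shows "card {j. lo \<le> j \<and> j < hi \<and> (if j < t then a else b) = r}
       = (if a = r then min t hi - lo else 0) + (if b = r then hi - max t lo else 0)"
proof (cases "a = r"; cases "b = r")
  assume "a = r" "b = r"
  then have "{j. lo \<le> j \<and> j < hi \<and> (if j < t then a else b) = r} = {lo..<hi}" by auto
  then show ?thesis using assms \<open>a = r\<close> \<open>b = r\<close> by (simp add: min_def max_def)
next
  assume "a = r" "b \<noteq> r"
  then have "{j. lo \<le> j \<and> j < hi \<and> (if j < t then a else b) = r} = {lo..<min t hi}" by auto
  then show ?thesis using \<open>a = r\<close> \<open>b \<noteq> r\<close> by simp
next
  assume "a \<noteq> r" "b = r"
  then have "{j. lo \<le> j \<and> j < hi \<and> (if j < t then a else b) = r} = {max t lo..<hi}" by auto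
  then show ?thesis using \<open>a \<noteq> r\<close> \<open>b = r\<close> by simp
next
  assume "a \<noteq> r" "b \<noteq> r"
  then have "{j. lo \<le> j \<and> j < hi \<and> (if j < t then a else b) = r} = {}" by auto
  then show ?thesis using \<open>a \<noteq> r\<close> \<open>b \<noteq> r\<close> by simp
qed

lemma mk_nth: "i < n \<Longrightarrow> mk n c p q ! i = nuf n c p q i"
  by (simp add: mk_def)

lemma mk_len: "length (mk n c p q) = n"
  by (simp add: mk_def)

locale cons =
  fixes n k l p q :: nat
  assumes n4: "4 \<le> n" and lk: "l \<le> k" and pq1: "k + q \<le> p + l" and pq2: "p + q \<le> k + l"
begin

definition "c = k + l"
definition "y0 = p + l - k"
definition "W = y0 - l"
definition "Y = q + W"
definition "z0 = l - y0"
definition "x1 = l - W"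
definition "lamf i = (if i = 0 then 2*k else if i = n-1 then 0 else k)"
definition "nv = mk n c p q"
definition "thr i = (if i = 0 then c + p else if i = 1 then k + x1 else if i = n-1 then z0 else k + l - Y)"
definition "alpha i = (if i \<le> 1 then 0 else if i = n-1 then 0 else i - 1)"
definition "beta i = (if i = 0 then 0 else if i = n-1 then n-2 else i)"
definition "S = skew_cells n (special_wt n k) nv"
definition "TT x = (if x \<in> S then (if snd x < thr (fst x) then alpha (fst x) else beta (fst x)) else 0)"

lemma nvf: "i < n \<Longrightarrow> nv ! i = nuf n c p q i"
  unfolding nv_def by (rule mk_nth)

lemma lamv: "i < n \<Longrightarrow> special_wt n k ! i = lamf i"
  using sw_nth[of n i k] n4 unfolding lamf_def by simp

lemma memS: "(i,j) \<in> S \<longleftrightarrow> i < n \<and> lamf i \<le> j \<and> j < nuf n c p q i"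
  unfolding S_def skew_cells_def using nvf lamv by auto

lemma ar: "y0 + 2*k = c + p" "q \<le> y0" "y0 + q \<le> 2*l" "W \<le> l" "W + q \<le> l" "Y \<le> l" "W \<le> Y" "Y \<le> y0"
  "Y \<le> p" "z0 \<le> l" "x1 + W = l" "y0 + x1 + z0 = 2*l" "q \<le> l" "p \<le> c" "x1 \<le> k"
  "k + q \<le> c + p - k" "Y = q + W"
  using n4 lk pq1 pq2 unfolding y0_def W_def Y_def z0_def x1_def c_def by auto

lemma fS: "finite S" unfolding S_def by (rule skew_finite)

lemma TT_in: "(i,j) \<in> S \<Longrightarrow> TT (i,j) = (if j < thr i then alpha i else beta i)"
  by (simp add: TT_def)

lemma lam_le: "i < n \<Longrightarrow> lamf i \<le> nuf n c p q i"
  using ar n4 unfolding lamf_def nuf_def c_def by auto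

definition "Qc i r = {x \<in> S. fst x = i \<and> TT x = r}"

lemma Qc_card: "i < n \<Longrightarrow> card (Qc i r) =
   (if alpha i = r then min (thr i) (nuf n c p q i) - lamf i else 0) +
   (if beta i = r then nuf n c p q i - max (thr i) (lamf i) else 0)"
proof -
  assume i: "i < n"
  let ?A = "{j. lamf i \<le> j \<and> j < nuf n c p q i \<and> (if j < thr i then alpha i else beta i) = r}"
  have "Qc i r = Pair i ` ?A"
    unfolding Qc_def using i by (auto simp: memS TT_in)
  moreover have "card (Pair i ` ?A) = card ?A" by (rule card_image) (auto simp: inj_on_def)
  ultimately have "card (Qc i r) = card ?A" by simp
  also have "card ?A = (if alpha i = r then min (thr i) (nuf n c p q i) - lamf i else 0) +
   (if beta i = r then nuf n c p q i - max (thr i) (lamf i) else 0)" by (rule ivl_card[OF lam_le[OF i]])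
  finally show ?thesis .
qed

lemma n_facts: "0 \<noteq> n-1" "1 \<noteq> n-1" "0 \<noteq> n-2" "1 \<noteq> n-2" "n-2 \<noteq> n-1" "2 \<noteq> n-1" "1 < n" "0 < n" "n-2 < n" "n-1 < n"
  using n4 by auto

lemma Q00: "card (Qc 0 0) = y0"
  using Qc_card[of 0 0] n_facts ar unfolding alpha_def beta_def thr_def nuf_def lamf_def by simp

lemma Q10: "card (Qc 1 0) = x1"
  using Qc_card[of 1 0] n_facts ar unfolding alpha_def beta_def thr_def nuf_def lamf_def c_def by simp

lemma Q11: "card (Qc 1 1) = Y"
  using Qc_card[of 1 1] n_facts ar unfolding alpha_def beta_def thr_def nuf_def lamf_def c_def by simp

lemma Qrr: "2 \<le> r \<Longrightarrow> r \<le> n-3 \<Longrightarrow> card (Qc r r) = Y"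
proof -
  assume r: "2 \<le> r" "r \<le> n-3"
  have f: "alpha r = r - 1" "beta r = r" "thr r = k + l - Y" "lamf r = k" "nuf n c p q r = c" "r < n"
    using r n4 unfolding alpha_def beta_def thr_def lamf_def nuf_def by auto
  have "r - 1 \<noteq> r" using r by simp
  then show ?thesis using Qc_card[of r r] f ar unfolding c_def by simp
qed

lemma Qsr: "1 \<le> r \<Longrightarrow> r \<le> n-3 \<Longrightarrow> card (Qc (Suc r) r) = l - Y"
proof -
  assume r: "1 \<le> r" "r \<le> n-3"
  have f: "alpha (Suc r) = r" "beta (Suc r) = Suc r" "thr (Suc r) = k + l - Y" "lamf (Suc r) = k"
     "k + l - Y \<le> nuf n c p q (Suc r)" "Suc r < n"
    using r n4 ar unfolding alpha_def beta_def thr_def lamf_def nuf_def c_def by auto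
  then show ?thesis using Qc_card[of "Suc r" r] ar by (simp add: min_def)
qed

lemma Qee: "card (Qc (n-2) (n-2)) = W"
proof -
  have f: "alpha (n-2) \<noteq> n-2" "beta (n-2) = n-2" "thr (n-2) = k + l - Y" "lamf (n-2) = k"
     "nuf n c p q (n-2) = c - q" "n - 2 < n"
    using n4 ar unfolding alpha_def beta_def thr_def lamf_def nuf_def c_def by auto
  have m: "max (k + l - Y) k = k + l - Y" using ar by simp
  have "c - q - (k + l - Y) = W" using ar(5,6,17) unfolding c_def by arith
  then show ?thesis using Qc_card[of "n-2" "n-2"] f m by simp
qed

lemma QL0: "card (Qc (n-1) 0) = z0"
proof -
  have f: "alpha (n-1) = 0" "beta (n-1) \<noteq> 0" "thr (n-1) = z0" "lamf (n-1) = 0"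
     "nuf n c p q (n-1) = c - p" "n - 1 < n"
    using n4 ar unfolding alpha_def beta_def thr_def lamf_def nuf_def c_def by auto
  have "z0 \<le> c - p" using pq1 pq2 unfolding z0_def y0_def c_def by arith
  then show ?thesis using f Qc_card[of "n-1" 0] by (simp add: min_def)
qed

lemma QLe: "card (Qc (n-1) (n-2)) = l - W"
proof -
  have f: "alpha (n-1) \<noteq> n-2" "beta (n-1) = n-2" "thr (n-1) = z0" "lamf (n-1) = 0"
     "nuf n c p q (n-1) = c - p" "n - 1 < n"
    using n4 ar unfolding alpha_def beta_def thr_def lamf_def nuf_def c_def by auto
  have "c - p - z0 = l - W" using pq1 pq2 unfolding z0_def y0_def c_def W_def by arith
  then show ?thesis using f Qc_card[of "n-1" "n-2"] by simp
qed

lemma Qdiag: "1 \<le> r \<Longrightarrow> r \<le> n-3 \<Longrightarrow> card (Qc r r) = Y"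
  using Q11 Qrr by (cases "r = 1") auto

lemma finQ: "finite (Qc i r)" unfolding Qc_def using fS by simp

lemma cardQ2: "a \<noteq> b \<Longrightarrow> card (Qc a r \<union> Qc b r) = card (Qc a r) + card (Qc b r)"
  by (rule card_Un_disjoint) (auto simp: fS Qc_def)

lemma loc: "x \<in> S \<Longrightarrow> TT x = alpha (fst x) \<or> TT x = beta (fst x)"
  by (cases x) (auto simp: TT_in)

lemma locS: "x \<in> S \<Longrightarrow> fst x < n"
  by (cases x) (auto simp: memS)

lemma locA: "x \<in> S \<Longrightarrow> TT x \<le> fst x"
  using loc[of x] n4 unfolding alpha_def beta_def by (auto split: if_splits)

lemma locB: "x \<in> S \<Longrightarrow> TT x \<le> n-2"
  using loc[of x] locS[of x] n4 unfolding alpha_def beta_def by (auto split: if_splits)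

lemma locC: "x \<in> S \<Longrightarrow> 1 \<le> TT x \<Longrightarrow> TT x \<le> n-3 \<Longrightarrow> fst x = TT x \<or> fst x = Suc (TT x)"
  using loc[of x] locS[of x] n4 unfolding alpha_def beta_def by (auto split: if_splits)

lemma locD: "x \<in> S \<Longrightarrow> TT x = 0 \<Longrightarrow> fst x = 0 \<or> fst x = 1 \<or> fst x = n-1"
  using loc[of x] locS[of x] n4 unfolding alpha_def beta_def by (auto split: if_splits)

lemma locE: "x \<in> S \<Longrightarrow> TT x = n-2 \<Longrightarrow> fst x = n-2 \<or> fst x = n-1"
  using loc[of x] locS[of x] n4 unfolding alpha_def beta_def by (auto split: if_splits)

lemma content: "r < n \<Longrightarrow> card {x \<in> S. TT x = r} = special_wt n l ! r"
proof -
  assume r: "r < n"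
  have rhs: "special_wt n l ! r = (if r = 0 then 2*l else if r = n-1 then 0 else l)"
    using sw_nth[of n r l] n4 r by simp
  consider "r = 0" | "1 \<le> r \<and> r \<le> n-3" | "r = n-2" | "r = n-1" using r by linarith
  then show ?thesis
  proof cases
    case 1
    have "{x \<in> S. TT x = r} = (Qc 0 0 \<union> Qc 1 0) \<union> Qc (n-1) 0"
      unfolding Qc_def using locD 1 by auto
    moreover have "card ((Qc 0 0 \<union> Qc 1 0) \<union> Qc (n-1) 0) = card (Qc 0 0 \<union> Qc 1 0) + card (Qc (n-1) 0)"
      by (rule card_Un_disjoint) (use n4 in \<open>auto simp: fS Qc_def\<close>)
    ultimately show ?thesis using cardQ2[of 0 1 0] Q00 Q10 QL0 ar rhs 1 by simp
  next
    case 2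
    have "{x \<in> S. TT x = r} = Qc r r \<union> Qc (Suc r) r"
      unfolding Qc_def using locC 2 by force
    moreover have "r \<noteq> n-1" "r \<noteq> 0" using 2 n4 by auto
    ultimately show ?thesis using cardQ2[of r "Suc r" r] Qdiag[of r] Qsr[of r] ar rhs 2 by simp
  next
    case 3
    have "{x \<in> S. TT x = r} = Qc (n-2) (n-2) \<union> Qc (n-1) (n-2)"
      unfolding Qc_def using locE 3 by auto
    moreover have ne: "n - 2 \<noteq> n - Suc 0" "n - 2 \<noteq> n - 1" using n4 by auto
    moreover have "card (Qc (n-2) (n-2) \<union> Qc (n-1) (n-2)) = W + (l - W)"
      using cardQ2[of "n-2" "n-1" "n-2"] Qee QLe ne by simp
    moreover have "special_wt n l ! r = l" using rhs 3 n4 by auto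
    ultimately show ?thesis using 3 ar by simp
  next
    case 4
    have e: "{x \<in> S. TT x = r} = {}" using locB 4 n4 by fastforce
    have m: "special_wt n l ! r = 0" using rhs 4 n4 by auto
    show ?thesis by (simp only: e m card.empty)
  qed
qed

lemma lattice:
  assumes x: "x \<in> S" and r: "Suc r < n"
  shows "card {x' \<in> S. read_le x' x \<and> TT x' = Suc r} \<le> card {x' \<in> S. read_le x' x \<and> TT x' = r}"
proof -
  have A: "card {x' \<in> S. read_le x' x \<and> TT x' = Suc r} \<le> card {x' \<in> S. fst x' \<le> fst x \<and> TT x' = Suc r}"
    by (rule card_mono) (auto simp: fS read_le_def)
  have B: "card {x' \<in> S. fst x' < fst x \<and> TT x' = r} \<le> card {x' \<in> S. read_le x' x \<and> TT x' = r}"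
    by (rule card_mono) (auto simp: fS read_le_def)
  have C: "card {x' \<in> S. fst x' \<le> fst x \<and> TT x' = Suc r} \<le> card {x' \<in> S. fst x' < fst x \<and> TT x' = r}"
  proof -
    consider "Suc r = n-1" | "Suc r \<le> n-2 \<and> fst x \<le> r" | "Suc r \<le> n-2 \<and> fst x = Suc r"
      | "Suc r \<le> n-2 \<and> Suc (Suc r) \<le> fst x" using r by linarith
    then show ?thesis
    proof cases
      case 1
      have "{x' \<in> S. fst x' \<le> fst x \<and> TT x' = Suc r} = {}" using locB 1 n4 by fastforce
      then show ?thesis by (metis card.empty zero_le)
    next
      case 2
      have "{x' \<in> S. fst x' \<le> fst x \<and> TT x' = Suc r} = {}" using locA 2 by fastforce
      then show ?thesis by (metis card.empty zero_le)
    next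
      case 3
      have "card {x' \<in> S. fst x' \<le> fst x \<and> TT x' = Suc r} \<le> card (Qc (Suc r) (Suc r))"
        by (rule card_mono[OF finQ]) (use locA 3 in \<open>force simp: Qc_def\<close>)
      moreover have "card (Qc r r) \<le> card {x' \<in> S. fst x' < fst x \<and> TT x' = r}"
        by (rule card_mono) (use 3 fS in \<open>auto simp: Qc_def\<close>)
      moreover have "card (Qc (Suc r) (Suc r)) \<le> card (Qc r r)"
      proof (cases "r = 0")
        case True then show ?thesis using Q11 Q00 ar by simp
      next
        case False
        show ?thesis
        proof (cases "Suc r = n-2")
          case True
          then have "card (Qc (Suc r) (Suc r)) = W" using Qee by simp
          moreover have "card (Qc r r) = Y" using Qdiag[of r] False True by simp
          ultimately show ?thesis using ar by simp
        next
          case False2: False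
          have "Suc r \<le> n-3" "r \<le> n-3" using 3 False2 by auto
          then show ?thesis using Qdiag[of r] Qdiag[of "Suc r"] False by simp
        qed
      qed
      ultimately show ?thesis by linarith
    next
      case 4
      have L: "card {x' \<in> S. fst x' \<le> fst x \<and> TT x' = Suc r} \<le> l"
      proof -
        have "card {x' \<in> S. fst x' \<le> fst x \<and> TT x' = Suc r} \<le> card {x' \<in> S. TT x' = Suc r}"
          by (rule card_mono) (auto simp: fS)
        moreover have "card {x' \<in> S. TT x' = Suc r} = l"
        proof -
          have "Suc r \<noteq> n - 1" "Suc r \<noteq> 0" using 4 n4 by auto
          then show ?thesis using content[of "Suc r"] r sw_nth[of n "Suc r" l] n4 by simp
        qed
        ultimately show ?thesis by simp
      qed
      show ?thesis
      proof (cases "r = 0")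
        case True
        have "card (Qc 0 0 \<union> Qc 1 0) \<le> card {x' \<in> S. fst x' < fst x \<and> TT x' = r}"
          by (rule card_mono) (use 4 True fS in \<open>auto simp: Qc_def\<close>)
        moreover have "card (Qc 0 0 \<union> Qc 1 0) = y0 + x1" using cardQ2[of 0 1 0] Q00 Q10 by simp
        moreover have "l \<le> y0 + x1" using ar by simp
        ultimately show ?thesis using L by linarith
      next
        case False
        have "{x' \<in> S. fst x' < fst x \<and> TT x' = r} = {x' \<in> S. TT x' = r}"
          using locC False 4 by fastforce
        moreover have "card {x' \<in> S. TT x' = r} = l"
        proof -
          have "r \<noteq> n - 1" "r \<noteq> 0" "r < n" using 4 n4 False by auto
          then show ?thesis using content[of r] sw_nth[of n r l] n4 by simp
        qed
        ultimately show ?thesis using L by simp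
      qed
    qed
  qed
  from A C B show ?thesis by linarith
qed

end

context cons begin

lemma row_mono: "(i,j) \<in> S \<Longrightarrow> (i, Suc j) \<in> S \<Longrightarrow> TT (i,j) \<le> TT (i, Suc j)"
proof -
  assume a: "(i,j) \<in> S" "(i, Suc j) \<in> S"
  have "alpha i \<le> beta i" unfolding alpha_def beta_def using n4 by auto
  then show ?thesis using a by (auto simp: TT_in)
qed

lemma col_str: "(i,j) \<in> S \<Longrightarrow> (Suc i, j) \<in> S \<Longrightarrow> TT (i,j) < TT (Suc i, j)"
proof -
  assume a: "(i,j) \<in> S" "(Suc i, j) \<in> S"
  have i: "Suc i < n" and j1: "lamf i \<le> j" "j < nuf n c p q i"
    and j2: "lamf (Suc i) \<le> j" "j < nuf n c p q (Suc i)" using a memS by auto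
  consider "i = 0" | "i = 1" | "2 \<le> i \<and> Suc i \<le> n-2" | "Suc i = n-1" using i by linarith
  then show ?thesis
  proof cases
    case 1
    have "2*k \<le> j" using j1 1 unfolding lamf_def by simp
    then have "\<not> j < thr 1" using ar lk unfolding thr_def by simp
    moreover have "beta 1 = 1" using n_facts by (simp add: beta_def)
    ultimately have "TT (Suc 0, j) = 1" using a 1 by (simp add: TT_in)
    moreover have "TT (0,j) = 0" using a 1 by (simp add: TT_in alpha_def beta_def)
    ultimately show ?thesis using 1 by simp
  next
    case 2
    have f: "thr 1 = k + x1" "thr 2 = k + l - Y" "alpha 1 = 0" "beta 1 = 1" "alpha 2 = 1" "beta 2 = 2"
      using n_facts n4 unfolding thr_def alpha_def beta_def by auto
    have "k + l - Y \<le> k + x1" using ar by simp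
    then show ?thesis using a 2 f by (auto simp: TT_in numeral_2_eq_2)
  next
    case 3
    have f: "thr i = k + l - Y" "thr (Suc i) = k + l - Y" "alpha i = i - 1" "beta i = i"
       "alpha (Suc i) = i" "beta (Suc i) = Suc i"
      using 3 n4 unfolding thr_def alpha_def beta_def by auto
    have "i - 1 < i" using 3 by simp
    then show ?thesis using a f by (auto simp: TT_in)
  next
    case 4
    have f: "thr i = k + l - Y" "thr (Suc i) = z0" "alpha i = n - 3" "beta (Suc i) = n - 2"
      using 4 n4 unfolding thr_def alpha_def beta_def by auto
    have "lamf i = k" "nuf n c p q (Suc i) = c - p" using 4 n4 unfolding lamf_def nuf_def by auto
    then have "z0 \<le> j" "j < k + l - Y" using j1 j2 ar lk unfolding c_def by auto
    then have "TT (i,j) = n - 3" "TT (Suc i, j) = n - 2" using a f by (auto simp: TT_in)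
    then show ?thesis using n4 by simp
  qed
qed

lemma LRT: "is_LR_tableau n (special_wt n k) (special_wt n l) nv TT"
  unfolding is_LR_tableau_def S_def[symmetric]
proof (intro conjI allI impI ballI)
  show "\<And>i. i < n \<Longrightarrow> special_wt n k ! i \<le> nv ! i" using lamv nvf lam_le by simp
  show "\<And>x. x \<notin> S \<Longrightarrow> TT x = 0" by (simp add: TT_def)
  show "\<And>x. x \<in> S \<Longrightarrow> TT x < n" using locB n4 by (meson diff_less le_less_trans zero_less_numeral less_le_trans numeral_le_iff semiring_norm(69) zero_less_diff)
  show "\<And>i j. (i, j) \<in> S \<and> (i, Suc j) \<in> S \<Longrightarrow> TT (i, j) \<le> TT (i, Suc j)" using row_mono by blast
  show "\<And>i j. (i, j) \<in> S \<and> (Suc i, j) \<in> S \<Longrightarrow> TT (i, j) < TT (Suc i, j)" using col_str by blast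
  show "\<And>r. r < n \<Longrightarrow> card {x \<in> S. TT x = r} = special_wt n l ! r" by (rule content)
  show "\<And>x r. x \<in> S \<Longrightarrow> Suc r < n \<Longrightarrow> card {c' \<in> S. read_le c' x \<and> TT c' = Suc r} \<le> card {c' \<in> S. read_le c' x \<and> TT c' = r}"
    by (rule lattice)
qed

lemma nv_Lambda: "nv \<in> Lambda n"
  unfolding Lambda_def
proof (intro CollectI conjI allI impI)
  show "length nv = n" by (simp add: nv_def mk_len)
  fix i assume i: "Suc i < n"
  have "q \<le> p" using pq1 lk by simp
  then have "nuf n c p q (Suc i) \<le> nuf n c p q i" using i n4 ar unfolding nuf_def c_def by auto
  then show "nv ! Suc i \<le> nv ! i" using nvf i by simp
qed

lemma symm: "i < n \<Longrightarrow> int (nuf n c p q (n - 1 - i)) + int (nuf n c p q i) = 2 * int c"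
proof -
  assume i: "i < n"
  have qp: "q \<le> p" "p \<le> c" "q \<le> c" using pq1 lk ar by auto
  consider "i = 0" | "i = 1" | "i = n-2" | "i = n-1" | "2 \<le> i \<and> i \<le> n-3" using i by linarith
  then show ?thesis
  proof cases
    case 1 then show ?thesis using n4 qp unfolding nuf_def by auto
  next
    case 2
    then have "n - 1 - i = n - 2" by simp
    then show ?thesis using 2 n4 qp unfolding nuf_def by auto
  next
    case 3
    then have "n - 1 - i = 1" using n4 by simp
    then show ?thesis using 3 n4 qp unfolding nuf_def by auto
  next
    case 4
    then have "n - 1 - i = 0" using n4 by simp
    then show ?thesis using 4 n4 qp unfolding nuf_def by auto
  next
    case 5
    then have "2 \<le> n - 1 - i" "n - 1 - i \<le> n - 3" using n4 by auto
    then show ?thesis using 5 n4 unfolding nuf_def by auto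
  qed
qed

lemma nv_sd: "self_dual n nv"
  unfolding self_dual_def
proof (intro allI impI)
  fix i assume i: "1 \<le> i \<and> i \<le> n - 1"
  have a: "int (nuf n c p q (n - 1 - i)) + int (nuf n c p q i) = 2 * int c"
  proof -
    have "i < n" using i n4 by linarith
    then show ?thesis by (rule symm)
  qed
  have b: "int (nuf n c p q (n - 1 - (i - 1))) + int (nuf n c p q (i - 1)) = 2 * int c"
  proof -
    have "i - 1 < n" using i n4 by linarith
    then show ?thesis by (rule symm)
  qed
  have e: "n - 1 - (i - 1) = n - i" "n - 1 - i = n - i - 1" using i by auto
  have "nv ! (i-1) = nuf n c p q (i-1)" "nv ! i = nuf n c p q i" "nv ! (n-i-1) = nuf n c p q (n-i-1)"
    "nv ! (n-i) = nuf n c p q (n-i)" using nvf i by auto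
  then show "int (nv ! (i - 1)) - int (nv ! i) = int (nv ! (n - i - 1)) - int (nv ! (n - i))"
    using a b e by simp
qed

end

lemma odd_sum: "(\<Sum>q\<le>l. 2*(l-q)+1) = ((l::nat)+1)^2"
proof (induction l)
  case 0 then show ?case by simp
next
  case (Suc l)
  have "(\<Sum>q\<le>Suc l. 2*(Suc l-q)+1) = (\<Sum>q\<le>l. 2*(Suc l-q)+1) + 1" by simp
  also have "(\<Sum>q\<le>l. 2*(Suc l-q)+1) = (\<Sum>q\<le>l. (2*(l-q)+1) + 2)"
    by (rule sum.cong) (auto simp: Suc_diff_le)
  also have "\<dots> = (\<Sum>q\<le>l. 2*(l-q)+1) + (\<Sum>q\<le>l. (2::nat))" by (rule sum.distrib)
  also have "(\<Sum>q\<le>l. (2::nat)) = 2*(l+1)" by simp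
  finally have "(\<Sum>q\<le>Suc l. 2*(Suc l-q)+1) = (l+1)^2 + 2*(l+1) + 1" using Suc.IH by simp
  then show ?case by (simp add: power2_eq_square)
qed

theorem corollary6p7:
  fixes n k l :: nat
  assumes "n \<ge> 4" and "l \<le> k"
  shows "card {nu \<in> Lambda n.
            lr_coeff n (special_wt n k) (special_wt n l) nu \<noteq> 0 \<and> self_dual n nu}
         = (l + 1) ^ 2"
proof -
  define P where "P = (SIGMA q:{..l}. {k+q-l..k+l-q})"
  define f where "f = (\<lambda>(q,p). mk n (k+l) p q)"
  have Pc: "\<And>q p. (q,p) \<in> P \<longleftrightarrow> k + q \<le> p + l \<and> p + q \<le> k + l"
  proof -
    fix q p
    have "(q,p) \<in> P \<longleftrightarrow> q \<le> l \<and> k+q-l \<le> p \<and> p \<le> k+l-q" unfolding P_def by simp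
    also have "\<dots> \<longleftrightarrow> k + q \<le> p + l \<and> p + q \<le> k + l"
    proof -
      have e1: "k+q-l \<le> p \<longleftrightarrow> k + q \<le> p + l" by (simp add: le_diff_conv)
      have e2: "q \<le> l \<Longrightarrow> p \<le> k+l-q \<longleftrightarrow> p + q \<le> k + l" by (simp add: le_diff_conv2)
      have e3: "k + q \<le> p + l \<Longrightarrow> p + q \<le> k + l \<Longrightarrow> q \<le> l" by linarith
      show ?thesis using e1 e2 e3 by blast
    qed
    finally show "(q,p) \<in> P \<longleftrightarrow> k + q \<le> p + l \<and> p + q \<le> k + l" .
  qed
  have seteq: "{nu \<in> Lambda n. lr_coeff n (special_wt n k) (special_wt n l) nu \<noteq> 0 \<and> self_dual n nu} = f ` P"
  proof
    show "{nu \<in> Lambda n. lr_coeff n (special_wt n k) (special_wt n l) nu \<noteq> 0 \<and> self_dual n nu} \<subseteq> f ` P"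
    proof
      fix nu assume nu: "nu \<in> {nu \<in> Lambda n. lr_coeff n (special_wt n k) (special_wt n l) nu \<noteq> 0 \<and> self_dual n nu}"
      have nuL: "nu \<in> Lambda n" and lr: "lr_coeff n (special_wt n k) (special_wt n l) nu \<noteq> 0"
        and sd: "self_dual n nu" using nu by simp_all
      have "{T. is_LR_tableau n (special_wt n k) (special_wt n l) nu T} \<noteq> {}"
      proof
        assume "{T. is_LR_tableau n (special_wt n k) (special_wt n l) nu T} = {}"
        then have "lr_coeff n (special_wt n k) (special_wt n l) nu = 0" unfolding lr_coeff_def by (simp only: card.empty)
        then show False using lr by simp
      qed
      then obtain T where T: "is_LR_tableau n (special_wt n k) (special_wt n l) nu T" by blast
      have N: "k + l \<le> nu!1 \<and> nu!1 \<le> nu!0 \<and> k + (nu!1 - (k+l)) \<le> (nu!0 - (k+l)) + l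
        \<and> (nu!0 - (k+l)) + (nu!1 - (k+l)) \<le> k + l \<and> nu = mk n (k+l) (nu!0 - (k+l)) (nu!1 - (k+l))"
        by (rule necessity[OF assms(1) assms(2) nuL T sd])
      then have "(nu!1 - (k+l), nu!0 - (k+l)) \<in> P" by (intro Pc[THEN iffD2] conjI) (use N in blast)+
      moreover have "nu = f (nu!1 - (k+l), nu!0 - (k+l))" using N unfolding f_def by simp
      ultimately show "nu \<in> f ` P" by blast
    qed
  next
    show "f ` P \<subseteq> {nu \<in> Lambda n. lr_coeff n (special_wt n k) (special_wt n l) nu \<noteq> 0 \<and> self_dual n nu}"
    proof
      fix nu assume "nu \<in> f ` P"
      then obtain q p where qp: "(q,p) \<in> P" "nu = mk n (k+l) p q" unfolding f_def by auto
      interpret cons n k l p q using assms qp(1) Pc by unfold_locales auto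
      have nunv: "nu = nv" unfolding nv_def c_def using qp by simp
      have "TT \<in> {T. is_LR_tableau n (special_wt n k) (special_wt n l) nv T}" using LRT by simp
      then have "lr_coeff n (special_wt n k) (special_wt n l) nv \<noteq> 0"
        unfolding lr_coeff_def using LR_finite by (metis card_0_eq empty_iff)
      then show "nu \<in> {nu \<in> Lambda n. lr_coeff n (special_wt n k) (special_wt n l) nu \<noteq> 0 \<and> self_dual n nu}"
        using nunv nv_Lambda nv_sd by simp
    qed
  qed
  have inj: "inj_on f P"
  proof (rule inj_onI)
    fix a b assume ab: "a \<in> P" "b \<in> P" "f a = f b"
    obtain q p where a: "a = (q,p)" by force
    obtain q' p' where b: "b = (q',p')" by force
    have n01: "0 < n" "1 < n" using assms(1) by auto
    have "mk n (k+l) p q ! 0 = mk n (k+l) p' q' ! 0" "mk n (k+l) p q ! 1 = mk n (k+l) p' q' ! 1"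
      using ab a b unfolding f_def by simp_all
    then have "p = p'" "q = q'" using n01 by (simp_all add: mk_nth nuf_def)
    then show "a = b" using a b by simp
  qed
  have "card (f ` P) = card P" by (rule card_image[OF inj])
  also have "card P = (\<Sum>q\<le>l. card {k+q-l..k+l-q})" unfolding P_def by (simp add: card_SigmaI)
  also have "\<dots> = (\<Sum>q\<le>l. 2*(l-q)+1)"
    by (rule sum.cong) (use assms(2) in auto)
  also have "\<dots> = (l+1)^2" by (rule odd_sum)
  finally show ?thesis using seteq by simp
qed

end
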